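(* Let $H$ be a weak Hopf algebra and $A$ a symmetric partial $H$-module algebra. Then the map $\pi\colon H\to\mathrm{End}_\Bbbk(A)$ given by $\pi(h)(a)=h\cdot a$ is a partial representation of $H$ in the algebra $\mathrm{End}_\Bbbk(A)$.
   Context: All algebras are associative and unital over a field $\Bbbk$; Sweedler notation $\Delta(h)=h_1\otimes h_2$, $\Delta(1_H)=1_1\otimes1_2$. A weak Hopf algebra is $(H,m,u,\Delta,\varepsilon,S)$ with $H$ an algebra, $(H,\Delta,\varepsilon)$ a coalgebra, and for all $g,h,k$: $\Delta(kh)=\Delta(k)\Delta(h)$; $\varepsilon(kh_1)\varepsilon(h_2g)=\varepsilon(khg)=\varepsilon(kh_2)\varepsilon(h_1g)$; $(1\otimes\Delta(1))(\Delta(1)\otimes1)=\Delta^2(1)=(\Delta(1)\otimes1)(1\otimes\Delta(1))$; $h_1S(h_2)=\varepsilon(1_1h)1_2$; $S(h_1)h_2=1_1\varepsilon(h1_2)$; $S(h)=S(h_1)h_2S(h_3)$. Symmetric partial $H$-module algebra: algebra $A$ with linear $h\otimes a\mapsto h\cdot a$ such that $h\cdot(ab)=(h_1\cdot a)(h_2\cdot b)$, $1_H\cdot a=a$, $h\cdot(k\cdot a)=(h_1\cdot1_A)((h_2k)\cdot a)$ and $h\cdot(k\cdot a)=((h_1k)\cdot a)(h_2\cdot1_A)$. A partial representation of $H$ in an algebra $B$ is a linear $\pi\colon H\to B$ with, for all $h,k$: (PR1) $\pi(1_H)=1_B$; (PR2) $\pi(h)\pi(k_1)\pi(S(k_2))=\pi(hk_1)\pi(S(k_2))$;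 (PR3) $\pi(h)\pi(S(k_1))\pi(k_2)=\pi(hS(k_1))\pi(k_2)$; (PR4) $\pi(h_1)\pi(S(h_2))\pi(k)=\pi(h_1)\pi(S(h_2)k)$; (PR5) $\pi(S(h_1))\pi(h_2)\pi(k)=\pi(S(h_1))\pi(h_2k)$; (PR6) $\pi(h)=\pi(h_1)\pi(S(h_2))\pi(h_3)$. *)

theory Defs
  imports Complex_Main
begin

text \<open>
  A comultiplication is given by a function delta :: 'h => ('h * 'h) list,
  delta h = [(h1_i, h2_i)] meaning Delta(h) = sum_i h1_i (x) h2_i.
  Since over a field the bilinear (resp. trilinear) forms separate the points of
  H (x) H (resp. H (x) H (x) H), two such representatives denote the same tensor
  iff all bilinear (resp. trilinear) forms agree on them.
\<close>

definition k_algebra :: "('k::field \<Rightarrow> 'h::ring_1 \<Rightarrow> 'h) \<Rightarrow> bool" where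
  "k_algebra sc \<longleftrightarrow> Vector_Spaces.vector_space sc \<and>
     (\<forall>c x y. sc c (x * y) = sc c x * y \<and> sc c (x * y) = x * sc c y)"

definition bilinear_form :: "('k::field \<Rightarrow> 'h::ab_group_add \<Rightarrow> 'h) \<Rightarrow> ('h \<Rightarrow> 'h \<Rightarrow> 'k) \<Rightarrow> bool" where
  "bilinear_form sc \<beta> \<longleftrightarrow>
     (\<forall>y. Vector_Spaces.linear sc (*) (\<lambda>x. \<beta> x y)) \<and> (\<forall>x. Vector_Spaces.linear sc (*) (\<lambda>y. \<beta> x y))"

definition trilinear_form :: "('k::field \<Rightarrow> 'h::ab_group_add \<Rightarrow> 'h) \<Rightarrow> ('h \<Rightarrow> 'h \<Rightarrow> 'h \<Rightarrow> 'k) \<Rightarrow> bool" where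
  "trilinear_form sc \<tau> \<longleftrightarrow>
     (\<forall>y z. Vector_Spaces.linear sc (*) (\<lambda>x. \<tau> x y z)) \<and> (\<forall>x z. Vector_Spaces.linear sc (*) (\<lambda>y. \<tau> x y z)) \<and>
     (\<forall>x y. Vector_Spaces.linear sc (*) (\<lambda>z. \<tau> x y z))"

definition teq2 :: "('k::field \<Rightarrow> 'h::ab_group_add \<Rightarrow> 'h) \<Rightarrow> ('h \<times> 'h) list \<Rightarrow> ('h \<times> 'h) list \<Rightarrow> bool" where
  "teq2 sc L M \<longleftrightarrow> (\<forall>\<beta>. bilinear_form sc \<beta> \<longrightarrow>
      (\<Sum>(a, b)\<leftarrow>L. \<beta> a b) = (\<Sum>(a, b)\<leftarrow>M. \<beta> a b))"

definition teq3 :: "('k::field \<Rightarrow> 'h::ab_group_add \<Rightarrow> 'h) \<Rightarrow> ('h \<times> 'h \<times> 'h) list \<Rightarrow> ('h \<times> 'h \<times> 'h) list \<Rightarrow> bool" where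
  "teq3 sc L M \<longleftrightarrow> (\<forall>\<tau>. trilinear_form sc \<tau> \<longrightarrow>
      (\<Sum>(a, b, c)\<leftarrow>L. \<tau> a b c) = (\<Sum>(a, b, c)\<leftarrow>M. \<tau> a b c))"

definition tmul2 :: "('h::times \<times> 'h) list \<Rightarrow> ('h \<times> 'h) list \<Rightarrow> ('h \<times> 'h) list" where
  "tmul2 L M = concat (map (\<lambda>(a, b). map (\<lambda>(c, d). (a * c, b * d)) M) L)"

definition tmul3 :: "('h::times \<times> 'h \<times> 'h) list \<Rightarrow> ('h \<times> 'h \<times> 'h) list \<Rightarrow> ('h \<times> 'h \<times> 'h) list" where
  "tmul3 L M = concat (map (\<lambda>(a, b, c). map (\<lambda>(d, e, f). (a * d, b * e, c * f)) M) L)"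

text \<open>(Delta (x) id) Delta h  and  (id (x) Delta) Delta h.\<close>
definition delta2_left :: "('h \<Rightarrow> ('h \<times> 'h) list) \<Rightarrow> 'h \<Rightarrow> ('h \<times> 'h \<times> 'h) list" where
  "delta2_left \<Delta> h = concat (map (\<lambda>(a, b). map (\<lambda>(c, d). (c, d, b)) (\<Delta> a)) (\<Delta> h))"

definition delta2_right :: "('h \<Rightarrow> ('h \<times> 'h) list) \<Rightarrow> 'h \<Rightarrow> ('h \<times> 'h \<times> 'h) list" where
  "delta2_right \<Delta> h = concat (map (\<lambda>(a, b). map (\<lambda>(c, d). (a, c, d)) (\<Delta> b)) (\<Delta> h))"

definition weak_hopf_algebra ::
  "('k::field \<Rightarrow> 'h::ring_1 \<Rightarrow> 'h) \<Rightarrow> ('h \<Rightarrow> ('h \<times> 'h) list) \<Rightarrow> ('h \<Rightarrow> 'k) \<Rightarrow> ('h \<Rightarrow> 'h) \<Rightarrow> bool" where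
  "weak_hopf_algebra sc \<Delta> \<epsilon> S \<longleftrightarrow>
     k_algebra sc \<and>
     \<comment> \<open>coalgebra: Delta linear, epsilon linear, coassociativity, counit\<close>
     (\<forall>x y. teq2 sc (\<Delta> (x + y)) (\<Delta> x @ \<Delta> y)) \<and>
     (\<forall>c x. teq2 sc (\<Delta> (sc c x)) (map (\<lambda>(a, b). (sc c a, b)) (\<Delta> x))) \<and>
     Vector_Spaces.linear sc (*) \<epsilon> \<and>
     (\<forall>h. teq3 sc (delta2_left \<Delta> h) (delta2_right \<Delta> h)) \<and>
     (\<forall>h. (\<Sum>(a, b)\<leftarrow>\<Delta> h. sc (\<epsilon> a) b) = h) \<and>
     (\<forall>h. (\<Sum>(a, b)\<leftarrow>\<Delta> h. sc (\<epsilon> b) a) = h) \<and>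
     \<comment> \<open>S linear\<close>
     Vector_Spaces.linear sc sc S \<and>
     \<comment> \<open>Delta multiplicative\<close>
     (\<forall>k h. teq2 sc (\<Delta> (k * h)) (tmul2 (\<Delta> k) (\<Delta> h))) \<and>
     \<comment> \<open>weak multiplicativity of the counit\<close>
     (\<forall>k h g. (\<Sum>(a, b)\<leftarrow>\<Delta> h. \<epsilon> (k * a) * \<epsilon> (b * g)) = \<epsilon> (k * h * g)) \<and>
     (\<forall>k h g. (\<Sum>(a, b)\<leftarrow>\<Delta> h. \<epsilon> (k * b) * \<epsilon> (a * g)) = \<epsilon> (k * h * g)) \<and>
     \<comment> \<open>weak comultiplicativity of the unit\<close>
     teq3 sc (tmul3 (map (\<lambda>(a, b). (1, a, b)) (\<Delta> 1)) (map (\<lambda>(a, b). (a, b, 1)) (\<Delta> 1)))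
             (delta2_left \<Delta> 1) \<and>
     teq3 sc (tmul3 (map (\<lambda>(a, b). (a, b, 1)) (\<Delta> 1)) (map (\<lambda>(a, b). (1, a, b)) (\<Delta> 1)))
             (delta2_left \<Delta> 1) \<and>
     \<comment> \<open>antipode axioms\<close>
     (\<forall>h. (\<Sum>(a, b)\<leftarrow>\<Delta> h. a * S b) = (\<Sum>(a, b)\<leftarrow>\<Delta> 1. sc (\<epsilon> (a * h)) b)) \<and>
     (\<forall>h. (\<Sum>(a, b)\<leftarrow>\<Delta> h. S a * b) = (\<Sum>(a, b)\<leftarrow>\<Delta> 1. sc (\<epsilon> (h * b)) a)) \<and>
     (\<forall>h. S h = (\<Sum>(a, b, c)\<leftarrow>delta2_left \<Delta> h. S a * b * S c))"

definition symmetric_partial_module_algebra ::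
  "('k::field \<Rightarrow> 'h::ring_1 \<Rightarrow> 'h) \<Rightarrow> ('h \<Rightarrow> ('h \<times> 'h) list) \<Rightarrow>
   ('k \<Rightarrow> 'a::ring_1 \<Rightarrow> 'a) \<Rightarrow> ('h \<Rightarrow> 'a \<Rightarrow> 'a) \<Rightarrow> bool" where
  "symmetric_partial_module_algebra sc \<Delta> scA act \<longleftrightarrow>
     k_algebra scA \<and>
     (\<forall>h. Vector_Spaces.linear scA scA (act h)) \<and> (\<forall>x. Vector_Spaces.linear sc scA (\<lambda>h. act h x)) \<and>
     (\<forall>h x y. act h (x * y) = (\<Sum>(a, b)\<leftarrow>\<Delta> h. act a x * act b y)) \<and>
     (\<forall>x. act 1 x = x) \<and>
     (\<forall>h k x. act h (act k x) = (\<Sum>(a, b)\<leftarrow>\<Delta> h. act a 1 * act (b * k) x)) \<and>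
     (\<forall>h k x. act h (act k x) = (\<Sum>(a, b)\<leftarrow>\<Delta> h. act (a * k) x * act b 1))"

text \<open>A partial representation of H in the algebra End_k(A) (product = composition),
  with elements of End_k(A) represented as linear functions 'a => 'a; equalities
  of endomorphisms are stated pointwise.\<close>
definition partial_representation_End ::
  "('k::field \<Rightarrow> 'h::ring_1 \<Rightarrow> 'h) \<Rightarrow> ('h \<Rightarrow> ('h \<times> 'h) list) \<Rightarrow> ('h \<Rightarrow> 'h) \<Rightarrow>
   ('k \<Rightarrow> 'a::ring_1 \<Rightarrow> 'a) \<Rightarrow> ('h \<Rightarrow> 'a \<Rightarrow> 'a) \<Rightarrow> bool" where
  "partial_representation_End sc \<Delta> S scA \<pi> \<longleftrightarrow>
     \<comment> \<open>pi is a linear map H -> End_k(A)\<close>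
     (\<forall>h. Vector_Spaces.linear scA scA (\<pi> h)) \<and> (\<forall>x. Vector_Spaces.linear sc scA (\<lambda>h. \<pi> h x)) \<and>
     \<comment> \<open>(PR1)\<close>
     (\<forall>x. \<pi> 1 x = x) \<and>
     \<comment> \<open>(PR2)\<close>
     (\<forall>h k x. (\<Sum>(a, b)\<leftarrow>\<Delta> k. \<pi> h (\<pi> a (\<pi> (S b) x))) = (\<Sum>(a, b)\<leftarrow>\<Delta> k. \<pi> (h * a) (\<pi> (S b) x))) \<and>
     \<comment> \<open>(PR3)\<close>
     (\<forall>h k x. (\<Sum>(a, b)\<leftarrow>\<Delta> k. \<pi> h (\<pi> (S a) (\<pi> b x))) = (\<Sum>(a, b)\<leftarrow>\<Delta> k. \<pi> (h * S a) (\<pi> b x))) \<and>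
     \<comment> \<open>(PR4)\<close>
     (\<forall>h k x. (\<Sum>(a, b)\<leftarrow>\<Delta> h. \<pi> a (\<pi> (S b) (\<pi> k x))) = (\<Sum>(a, b)\<leftarrow>\<Delta> h. \<pi> a (\<pi> (S b * k) x))) \<and>
     \<comment> \<open>(PR5)\<close>
     (\<forall>h k x. (\<Sum>(a, b)\<leftarrow>\<Delta> h. \<pi> (S a) (\<pi> b (\<pi> k x))) = (\<Sum>(a, b)\<leftarrow>\<Delta> h. \<pi> (S a) (\<pi> (b * k) x))) \<and>
     \<comment> \<open>(PR6)\<close>
     (\<forall>h x. \<pi> h x = (\<Sum>(a, b, c)\<leftarrow>delta2_left \<Delta> h. \<pi> a (\<pi> (S b) (\<pi> c x))))"

end

theory Submission
  imports Defs
begin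



definition lin :: "('k::field \<Rightarrow> 'b::ab_group_add \<Rightarrow> 'b) \<Rightarrow> ('k \<Rightarrow> 'c::ab_group_add \<Rightarrow> 'c) \<Rightarrow> ('b \<Rightarrow> 'c) \<Rightarrow> bool" where
  "lin s1 s2 f \<longleftrightarrow> (\<forall>x y. f (x + y) = f x + f y) \<and> (\<forall>c x. f (s1 c x) = s2 c (f x))"

lemma lin_zero: "lin s1 s2 f \<Longrightarrow> f 0 = 0"
  unfolding lin_def by (metis add_cancel_right_right add_0)

lemma lin_diff: "lin s1 s2 f \<Longrightarrow> f (x - y) = f x - f y"
  unfolding lin_def by (metis add_diff_cancel_right' diff_add_cancel)

lemma lin_sum_list: "lin s1 s2 f \<Longrightarrow> f (sum_list xs) = sum_list (map f xs)"
  by (induction xs) (auto simp: lin_zero lin_def)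

lemma lin_sum2: "lin s1 s2 f \<Longrightarrow> f (\<Sum>(a, b)\<leftarrow>L. g a b) = (\<Sum>(a, b)\<leftarrow>L. f (g a b))"
  by (simp add: lin_sum_list comp_def prod.case_distrib)

lemma lin_linear: "vector_space s1 \<Longrightarrow> vector_space s2 \<Longrightarrow> lin s1 s2 f \<Longrightarrow> Vector_Spaces.linear s1 s2 f"
  unfolding Vector_Spaces.linear_iff lin_def by auto

lemma linear_lin: "Vector_Spaces.linear s1 s2 f \<Longrightarrow> lin s1 s2 f"
  unfolding Vector_Spaces.linear_iff lin_def by auto

lemma vs_field: "vector_space ((*) :: 'k::field \<Rightarrow> 'k \<Rightarrow> 'k)"
  by unfold_locales (auto simp: algebra_simps)

lemma separate:
  assumes vs: "vector_space s" and x: "x \<noteq> 0"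
  shows "\<exists>\<phi>. Vector_Spaces.linear s ((*) :: 'k::field \<Rightarrow> 'k \<Rightarrow> 'k) \<phi> \<and> \<phi> x \<noteq> 0"
proof -
  interpret vp: vector_space_pair s "(*) :: 'k \<Rightarrow> 'k \<Rightarrow> 'k"
    using vs vs_field unfolding vector_space_pair_def by auto
  have "\<not> vp.vs1.dependent {x}"
    using x by (intro vp.vs1.independent_insertI) (auto simp: vp.vs1.span_empty vp.vs1.independent_empty)
  from vp.linear_independent_extend[OF this, of "\<lambda>_. 1"] show ?thesis by auto
qed

lemma sum_list_concat_map:
  "sum_list (map f (concat (map g xs))) = sum_list (map (\<lambda>x. sum_list (map f (g x))) xs)"
  by (induction xs) auto

lemma sum_swap0:
  fixes f :: "'x \<Rightarrow> 'y \<Rightarrow> 'c::comm_monoid_add"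
  shows "sum_list (map (\<lambda>x. sum_list (map (\<lambda>y. f x y) M)) L) = sum_list (map (\<lambda>y. sum_list (map (\<lambda>x. f x y) L)) M)"
proof (induction L)
  case Nil then show ?case by (induction M) auto
next
  case (Cons p L) then show ?case by (simp add: sum_list_addf[of "f p" _ M] del: sum_list_addf)
qed

lemma sum_swap:
  fixes F :: "'x \<Rightarrow> 'y \<Rightarrow> 'z \<Rightarrow> 'w \<Rightarrow> 'c::comm_monoid_add"
  shows "(\<Sum>(a, b)\<leftarrow>L. \<Sum>(c, d)\<leftarrow>M. F a b c d) = (\<Sum>(c, d)\<leftarrow>M. \<Sum>(a, b)\<leftarrow>L. F a b c d)"
  using sum_swap0[of "\<lambda>x y. case x of (a,b) \<Rightarrow> case y of (c,d) \<Rightarrow> F a b c d" M L]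
  by (simp add: case_prod_beta')




lemma lin_comp: "lin s2 s3 g \<Longrightarrow> lin s1 s2 f \<Longrightarrow> lin s1 s3 (\<lambda>x. g (f x))"
  unfolding lin_def by auto

locale wh =
  fixes sc :: "'k::field \<Rightarrow> 'h::ring_1 \<Rightarrow> 'h"
    and \<Delta> :: "'h \<Rightarrow> ('h \<times> 'h) list"
    and \<epsilon> :: "'h \<Rightarrow> 'k"
    and S :: "'h \<Rightarrow> 'h"
    and scA :: "'k \<Rightarrow> 'a::ring_1 \<Rightarrow> 'a"
    and act :: "'h \<Rightarrow> 'a \<Rightarrow> 'a"
  assumes WH: "weak_hopf_algebra sc \<Delta> \<epsilon> S"
    and PM: "symmetric_partial_module_algebra sc \<Delta> scA act"
begin

abbreviation "hl \<equiv> lin sc scA"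
abbreviation "hh \<equiv> lin sc sc"

definition bil :: "('h \<Rightarrow> 'h \<Rightarrow> 'a) \<Rightarrow> bool" where
  "bil F \<longleftrightarrow> (\<forall>b. hl (\<lambda>a. F a b)) \<and> (\<forall>a. hl (\<lambda>b. F a b))"
definition tril :: "('h \<Rightarrow> 'h \<Rightarrow> 'h \<Rightarrow> 'a) \<Rightarrow> bool" where
  "tril F \<longleftrightarrow> (\<forall>b c. hl (\<lambda>a. F a b c)) \<and> (\<forall>a c. hl (\<lambda>b. F a b c)) \<and> (\<forall>a b. hl (\<lambda>c. F a b c))"

lemma kH: "k_algebra sc" using WH unfolding weak_hopf_algebra_def by blast
lemma kA: "k_algebra scA" using PM unfolding symmetric_partial_module_algebra_def by blast
lemma vsH: "vector_space sc" using kH unfolding k_algebra_def by auto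
lemma vsA: "vector_space scA" using kA unfolding k_algebra_def by auto
lemma scH1: "sc c (x * y) = sc c x * y" using kH unfolding k_algebra_def by auto
lemma scH2: "sc c (x * y) = x * sc c y" using kH unfolding k_algebra_def by blast
lemma scA1: "scA c (x * y) = scA c x * y" using kA unfolding k_algebra_def by auto
lemma scA2: "scA c (x * y) = x * scA c y" using kA unfolding k_algebra_def by blast

lemma D_add: "teq2 sc (\<Delta> (x + y)) (\<Delta> x @ \<Delta> y)" using WH unfolding weak_hopf_algebra_def by blast
lemma D_sc: "teq2 sc (\<Delta> (sc c x)) (map (\<lambda>(a, b). (sc c a, b)) (\<Delta> x))" using WH unfolding weak_hopf_algebra_def by blast
lemma eps_lin: "Vector_Spaces.linear sc (*) \<epsilon>" using WH unfolding weak_hopf_algebra_def by blast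
lemma coass: "teq3 sc (delta2_left \<Delta> h) (delta2_right \<Delta> h)" using WH unfolding weak_hopf_algebra_def by blast
lemma counit2: "(\<Sum>(a, b)\<leftarrow>\<Delta> h. sc (\<epsilon> b) a) = h" using WH unfolding weak_hopf_algebra_def by blast
lemma S_lin: "Vector_Spaces.linear sc sc S" using WH unfolding weak_hopf_algebra_def by blast
lemma D_mult: "teq2 sc (\<Delta> (k * h)) (tmul2 (\<Delta> k) (\<Delta> h))" using WH unfolding weak_hopf_algebra_def by blast
lemma unit1: "teq3 sc (tmul3 (map (\<lambda>(a, b). (1, a, b)) (\<Delta> 1)) (map (\<lambda>(a, b). (a, b, 1)) (\<Delta> 1)))
             (delta2_left \<Delta> 1)" using WH unfolding weak_hopf_algebra_def by blast
lemma unit2: "teq3 sc (tmul3 (map (\<lambda>(a, b). (a, b, 1)) (\<Delta> 1)) (map (\<lambda>(a, b). (1, a, b)) (\<Delta> 1)))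
             (delta2_left \<Delta> 1)" using WH unfolding weak_hopf_algebra_def by blast
lemma anti1: "(\<Sum>(a, b)\<leftarrow>\<Delta> h. a * S b) = (\<Sum>(a, b)\<leftarrow>\<Delta> 1. sc (\<epsilon> (a * h)) b)" using WH unfolding weak_hopf_algebra_def by blast
lemma anti2: "(\<Sum>(a, b)\<leftarrow>\<Delta> h. S a * b) = (\<Sum>(a, b)\<leftarrow>\<Delta> 1. sc (\<epsilon> (h * b)) a)" using WH unfolding weak_hopf_algebra_def by blast
lemma anti3: "S h = (\<Sum>(a, b, c)\<leftarrow>delta2_left \<Delta> h. S a * b * S c)" using WH unfolding weak_hopf_algebra_def by blast

lemma act_linA: "Vector_Spaces.linear scA scA (act h)" using PM unfolding symmetric_partial_module_algebra_def by blast
lemma act_linH: "Vector_Spaces.linear sc scA (\<lambda>h. act h x)" using PM unfolding symmetric_partial_module_algebra_def by blast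
lemma M1: "act h (x * y) = (\<Sum>(a, b)\<leftarrow>\<Delta> h. act a x * act b y)" using PM unfolding symmetric_partial_module_algebra_def by blast
lemma M2: "act 1 x = x" using PM unfolding symmetric_partial_module_algebra_def by blast
lemma M3: "act h (act k x) = (\<Sum>(a, b)\<leftarrow>\<Delta> h. act a 1 * act (b * k) x)" using PM unfolding symmetric_partial_module_algebra_def by blast
lemma M4: "act h (act k x) = (\<Sum>(a, b)\<leftarrow>\<Delta> h. act (a * k) x * act b 1)" using PM unfolding symmetric_partial_module_algebra_def by blast

sublocale A: vector_space scA by (rule vsA)
sublocale H: vector_space sc by (rule vsH)

lemma vsK: "vector_space ((*) :: 'k \<Rightarrow> 'k \<Rightarrow> 'k)" by (rule vs_field)

lemma scA_lin: "lin scA scA (scA c)"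
  unfolding lin_def using vsA by (simp add: vector_space_def mult.commute)

lemma act_lin: "lin scA scA (act h)" using act_linA by (rule linear_lin)

lemma hh_id: "hh (\<lambda>h. h)" unfolding lin_def by simp
lemma hh_S: "hh m \<Longrightarrow> hh (\<lambda>h. S (m h))"
  using linear_lin[OF S_lin] unfolding lin_def by simp
lemma hh_mL: "hh m \<Longrightarrow> hh (\<lambda>h. c * m h)"
  unfolding lin_def by (simp add: distrib_left scH2)
lemma hh_mR: "hh m \<Longrightarrow> hh (\<lambda>h. m h * c)"
  unfolding lin_def by (simp add: distrib_right scH1)
lemma hl_act: "hh m \<Longrightarrow> hl (\<lambda>h. act (m h) x)"
  using linear_lin[OF act_linH[of x]] unfolding lin_def by simp
lemma hl_actA: "hl f \<Longrightarrow> hl (\<lambda>h. act g (f h))"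
  using act_lin[of g] unfolding lin_def by simp
lemma hl_mL: "hl f \<Longrightarrow> hl (\<lambda>h. y * f h)"
  unfolding lin_def by (simp add: distrib_left scA2)
lemma hl_mR: "hl f \<Longrightarrow> hl (\<lambda>h. f h * y)"
  unfolding lin_def by (simp add: distrib_right scA1)
lemma hl_scale: "hl f \<Longrightarrow> hl (\<lambda>h. scA c (f h))"
  using scA_lin[of c] unfolding lin_def by (simp add: A.scale_scale mult.commute)
lemma hl_eps: "hh m \<Longrightarrow> hl (\<lambda>h. scA (\<epsilon> (m h)) y)"
  using linear_lin[OF eps_lin] unfolding lin_def
  by (simp add: A.scale_scale A.scale_left_distrib)
lemma hl_sum: "(\<And>a b. hl (\<lambda>h. F h a b)) \<Longrightarrow> hl (\<lambda>h. \<Sum>(a, b)\<leftarrow>L. F h a b)"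
proof (induction L)
  case Nil then show ?case unfolding lin_def using A.scale_zero_right by simp
next
  case (Cons p L)
  then show ?case unfolding lin_def by (cases p) (simp add: A.scale_right_distrib)
qed

lemma hl_hl: "hl f \<Longrightarrow> lin scA ((*) :: 'k \<Rightarrow> 'k \<Rightarrow> 'k) \<phi> \<Longrightarrow> Vector_Spaces.linear sc (*) (\<lambda>x. \<phi> (f x))"
  by (rule lin_linear[OF vsH vsK]) (rule lin_comp)

lemma T2:
  assumes F: "bil F" and eq: "teq2 sc L M"
  shows "(\<Sum>(a, b)\<leftarrow>L. F a b) = (\<Sum>(a, b)\<leftarrow>M. F a b)"
proof (rule ccontr)
  assume ne: "\<not> ?thesis"
  then obtain \<phi> where \<phi>: "Vector_Spaces.linear scA ((*) :: 'k \<Rightarrow> 'k \<Rightarrow> 'k) \<phi>"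
    and nz: "\<phi> ((\<Sum>(a, b)\<leftarrow>L. F a b) - (\<Sum>(a, b)\<leftarrow>M. F a b)) \<noteq> 0"
    using separate[OF vsA, of "(\<Sum>(a, b)\<leftarrow>L. F a b) - (\<Sum>(a, b)\<leftarrow>M. F a b)"] by auto
  have l: "lin scA (*) \<phi>" using \<phi> by (rule linear_lin)
  have "bilinear_form sc (\<lambda>x y. \<phi> (F x y))"
    unfolding bilinear_form_def using F l unfolding bil_def by (auto intro: hl_hl)
  then have "(\<Sum>(a, b)\<leftarrow>L. \<phi> (F a b)) = (\<Sum>(a, b)\<leftarrow>M. \<phi> (F a b))"
    using eq unfolding teq2_def by blast
  then have "\<phi> (\<Sum>(a, b)\<leftarrow>L. F a b) = \<phi> (\<Sum>(a, b)\<leftarrow>M. F a b)"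
    by (simp add: lin_sum2[OF l])
  then show False using nz lin_diff[OF l] by simp
qed

lemma T3:
  assumes F: "tril F" and eq: "teq3 sc L M"
  shows "(\<Sum>(a, b, c)\<leftarrow>L. F a b c) = (\<Sum>(a, b, c)\<leftarrow>M. F a b c)"
proof (rule ccontr)
  assume ne: "\<not> ?thesis"
  then obtain \<phi> where \<phi>: "Vector_Spaces.linear scA ((*) :: 'k \<Rightarrow> 'k \<Rightarrow> 'k) \<phi>"
    and nz: "\<phi> ((\<Sum>(a, b, c)\<leftarrow>L. F a b c) - (\<Sum>(a, b, c)\<leftarrow>M. F a b c)) \<noteq> 0"
    using separate[OF vsA, of "(\<Sum>(a, b, c)\<leftarrow>L. F a b c) - (\<Sum>(a, b, c)\<leftarrow>M. F a b c)"] by auto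
  have l: "lin scA (*) \<phi>" using \<phi> by (rule linear_lin)
  have "trilinear_form sc (\<lambda>x y z. \<phi> (F x y z))"
    unfolding trilinear_form_def using F l unfolding tril_def by (auto intro: hl_hl)
  then have "(\<Sum>(a, b, c)\<leftarrow>L. \<phi> (F a b c)) = (\<Sum>(a, b, c)\<leftarrow>M. \<phi> (F a b c))"
    using eq unfolding teq3_def by blast
  then have "\<phi> (\<Sum>(a, b, c)\<leftarrow>L. F a b c) = \<phi> (\<Sum>(a, b, c)\<leftarrow>M. F a b c)"
    by (simp add: lin_sum_list[OF l] comp_def prod.case_distrib)
  then show False using nz lin_diff[OF l] by simp
qed

end



context wh begin

lemmas lr = hh_id hh_S hh_mL hh_mR hl_act hl_actA hl_mL hl_mR hl_scale hl_eps hl_sum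

lemma bilI: "(\<And>b. hl (\<lambda>a. F a b)) \<Longrightarrow> (\<And>a. hl (\<lambda>b. F a b)) \<Longrightarrow> bil F"
  unfolding bil_def by blast
lemma trilI: "(\<And>b c. hl (\<lambda>a. F a b c)) \<Longrightarrow> (\<And>a c. hl (\<lambda>b. F a b c)) \<Longrightarrow> (\<And>a b. hl (\<lambda>c. F a b c)) \<Longrightarrow> tril F"
  unfolding tril_def by blast

lemma D_add': "bil F \<Longrightarrow> (\<Sum>(a, b)\<leftarrow>\<Delta> (x + y). F a b) = (\<Sum>(a, b)\<leftarrow>\<Delta> x. F a b) + (\<Sum>(a, b)\<leftarrow>\<Delta> y. F a b)"
  using T2[OF _ D_add, of F x y] by simp

lemma D_sc': assumes F: "bil F"
  shows "(\<Sum>(a, b)\<leftarrow>\<Delta> (sc c x). F a b) = scA c (\<Sum>(a, b)\<leftarrow>\<Delta> x. F a b)"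
proof -
  have "(\<Sum>(a, b)\<leftarrow>\<Delta> (sc c x). F a b) = (\<Sum>(a, b)\<leftarrow>map (\<lambda>(a, b). (sc c a, b)) (\<Delta> x). F a b)"
    using T2[OF F D_sc] by simp
  also have "\<dots> = (\<Sum>(a, b)\<leftarrow>\<Delta> x. F (sc c a) b)"
    by (simp add: comp_def case_prod_beta')
  also have "\<dots> = (\<Sum>(a, b)\<leftarrow>\<Delta> x. scA c (F a b))"
    using F unfolding bil_def lin_def by simp
  also have "\<dots> = scA c (\<Sum>(a, b)\<leftarrow>\<Delta> x. F a b)"
    by (simp add: lin_sum2[OF scA_lin])
  finally show ?thesis .
qed

lemma hl_D0: "bil F \<Longrightarrow> hl (\<lambda>h. \<Sum>(a, b)\<leftarrow>\<Delta> h. F a b)"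
  unfolding lin_def using D_add' D_sc' by blast

lemma hl_D: "(\<And>b. hl (\<lambda>a. F a b)) \<Longrightarrow> (\<And>a. hl (\<lambda>b. F a b)) \<Longrightarrow> hh m \<Longrightarrow> hl (\<lambda>h. \<Sum>(a, b)\<leftarrow>\<Delta> (m h). F a b)"
  by (rule lin_comp[OF hl_D0]) (rule bilI)

lemmas lrs = lr hl_D

lemma CA: "tril F \<Longrightarrow> (\<Sum>(a, b)\<leftarrow>\<Delta> h. \<Sum>(c, d)\<leftarrow>\<Delta> a. F c d b) = (\<Sum>(a, b)\<leftarrow>\<Delta> h. \<Sum>(c, d)\<leftarrow>\<Delta> b. F a c d)"
  using T3[OF _ coass, of F h]
  by (simp add: delta2_left_def delta2_right_def sum_list_concat_map comp_def case_prod_beta')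

lemma MU: "bil F \<Longrightarrow> (\<Sum>(a, b)\<leftarrow>\<Delta> (k * h). F a b) = (\<Sum>(a, b)\<leftarrow>\<Delta> k. \<Sum>(c, d)\<leftarrow>\<Delta> h. F (a * c) (b * d))"
  using T2[OF _ D_mult, of F k h]
  by (simp add: tmul2_def sum_list_concat_map comp_def case_prod_beta')

lemma U1: "tril F \<Longrightarrow> (\<Sum>(a, b)\<leftarrow>\<Delta> 1. \<Sum>(c, d)\<leftarrow>\<Delta> a. F c d b) = (\<Sum>(a, b)\<leftarrow>\<Delta> 1. \<Sum>(c, d)\<leftarrow>\<Delta> 1. F c (a * d) b)"
  using T3[OF _ unit1, of F]
  by (simp add: tmul3_def delta2_left_def sum_list_concat_map comp_def case_prod_beta')

lemma U2: "tril F \<Longrightarrow> (\<Sum>(a, b)\<leftarrow>\<Delta> 1. \<Sum>(c, d)\<leftarrow>\<Delta> a. F c d b) = (\<Sum>(a, b)\<leftarrow>\<Delta> 1. \<Sum>(c, d)\<leftarrow>\<Delta> 1. F a (b * c) d)"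
  using T3[OF _ unit2, of F]
  by (simp add: tmul3_def delta2_left_def sum_list_concat_map comp_def case_prod_beta')

lemma C2': "hl f \<Longrightarrow> (\<Sum>(a, b)\<leftarrow>\<Delta> h. scA (\<epsilon> b) (f a)) = f h"
proof -
  assume f: "hl f"
  have "f h = f (\<Sum>(a, b)\<leftarrow>\<Delta> h. sc (\<epsilon> b) a)" by (simp add: counit2)
  also have "\<dots> = (\<Sum>(a, b)\<leftarrow>\<Delta> h. scA (\<epsilon> b) (f a))"
    using f by (simp add: lin_sum2[OF f]) (simp add: lin_def)
  finally show ?thesis by simp
qed

end



context wh begin

lemma sum_cong2: "(\<And>a b. f a b = g a b) \<Longrightarrow> (\<Sum>(a, b)\<leftarrow>L. f a b) = (\<Sum>(a, b)\<leftarrow>L. g a b)"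
  by simp

lemma L1:
  assumes F: "bil F"
  shows "(\<Sum>(a, b)\<leftarrow>\<Delta> h. \<Sum>(c, d)\<leftarrow>\<Delta> b. F a (c * S d)) = (\<Sum>(a, b)\<leftarrow>\<Delta> 1. F (a * h) b)"
proof -
  have F1: "\<And>b. hl (\<lambda>a. F a b)" and F2: "\<And>a. hl (\<lambda>b. F a b)" using F unfolding bil_def by auto
  have F1': "\<And>m b. hh m \<Longrightarrow> hl (\<lambda>h. F (m h) b)" by (rule lin_comp[OF F1])
  have F2': "\<And>m a. hh m \<Longrightarrow> hl (\<lambda>h. F a (m h))" by (rule lin_comp[OF F2])
  define G where "G a b = (\<Sum>(u, v)\<leftarrow>\<Delta> 1. scA (\<epsilon> (u * b)) (F a v))" for a b
  have s1: "(\<Sum>(c, d)\<leftarrow>\<Delta> b. F a (c * S d)) = G a b" for a b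
  proof -
    have "(\<Sum>(c, d)\<leftarrow>\<Delta> b. F a (c * S d)) = F a (\<Sum>(c, d)\<leftarrow>\<Delta> b. c * S d)"
      by (simp add: lin_sum2[OF F2])
    also have "\<dots> = F a (\<Sum>(u, v)\<leftarrow>\<Delta> 1. sc (\<epsilon> (u * b)) v)" by (simp add: anti1)
    also have "\<dots> = G a b" unfolding G_def using F2[of a]
      by (simp add: lin_sum2[OF F2]) (simp add: lin_def)
    finally show ?thesis .
  qed
  have bG: "bil G" unfolding G_def by (intro bilI lrs F1)
  define E where "E x y z = (\<Sum>(a, b)\<leftarrow>\<Delta> h. scA (\<epsilon> (y * b)) (F (x * a) z))" for x y z
  have tE: "tril E" unfolding E_def by (intro trilI lrs F1' F2')
  have "(\<Sum>(a, b)\<leftarrow>\<Delta> h. \<Sum>(c, d)\<leftarrow>\<Delta> b. F a (c * S d)) = (\<Sum>(a, b)\<leftarrow>\<Delta> (1 * h). G a b)"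
    by (simp add: s1)
  also have "\<dots> = (\<Sum>(p, q)\<leftarrow>\<Delta> 1. \<Sum>(a, b)\<leftarrow>\<Delta> h. G (p * a) (q * b))"
    by (rule MU[OF bG])
  also have "\<dots> = (\<Sum>(p, q)\<leftarrow>\<Delta> 1. \<Sum>(u, v)\<leftarrow>\<Delta> 1. \<Sum>(a, b)\<leftarrow>\<Delta> h. scA (\<epsilon> (u * (q * b))) (F (p * a) v))"
    unfolding G_def by (rule sum_cong2) (rule sum_swap)
  also have "\<dots> = (\<Sum>(u, v)\<leftarrow>\<Delta> 1. \<Sum>(p, q)\<leftarrow>\<Delta> 1. E p (u * q) v)"
    unfolding E_def by (subst sum_swap) (simp add: mult.assoc)
  also have "\<dots> = (\<Sum>(a, b)\<leftarrow>\<Delta> 1. \<Sum>(c, d)\<leftarrow>\<Delta> a. E c d b)"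
    by (rule U1[OF tE, symmetric])
  also have "\<dots> = (\<Sum>(a, b)\<leftarrow>\<Delta> 1. F (a * h) b)"
  proof (rule sum_cong2)
    fix a b
    have bb: "bil (\<lambda>w z. scA (\<epsilon> z) (F w b))" by (intro bilI lrs F1)
    have "(\<Sum>(c, d)\<leftarrow>\<Delta> a. E c d b) = (\<Sum>(w, z)\<leftarrow>\<Delta> (a * h). scA (\<epsilon> z) (F w b))"
      unfolding E_def MU[OF bb] ..
    also have "\<dots> = F (a * h) b" by (rule C2'[OF F1])
    finally show "(\<Sum>(c, d)\<leftarrow>\<Delta> a. E c d b) = F (a * h) b" .
  qed
  finally show ?thesis .
qed

end



context wh begin

lemma hhsum: "hh m \<Longrightarrow> m (\<Sum>(a, b)\<leftarrow>L. g a b) = (\<Sum>(a, b)\<leftarrow>L. m (g a b))"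
  by (rule lin_sum2)

lemma K:
  assumes F: "bil F"
  shows "(\<Sum>(a, b)\<leftarrow>\<Delta> h. \<Sum>(c, d)\<leftarrow>\<Delta> (S a). F (c * b) d) = (\<Sum>(u, v)\<leftarrow>\<Delta> 1. F u (v * S h))"
proof -
  have F1: "\<And>b. hl (\<lambda>a. F a b)" and F2: "\<And>a. hl (\<lambda>b. F a b)" using F unfolding bil_def by auto
  have F1': "\<And>m b. hh m \<Longrightarrow> hl (\<lambda>h. F (m h) b)" by (rule lin_comp[OF F1])
  have F2': "\<And>m a. hh m \<Longrightarrow> hl (\<lambda>h. F a (m h))" by (rule lin_comp[OF F2])
  define G where "G a x z = (\<Sum>(c, d)\<leftarrow>\<Delta> (S a). F (c * x) (d * z))" for a x z
  define Q where "Q a x r s = (\<Sum>(c, d)\<leftarrow>\<Delta> (S a). F (c * x) (d * (r * S s)))" for a x r s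
  define R where "R a b' s = (\<Sum>(e, f)\<leftarrow>\<Delta> (S a * b'). F e (f * S s))" for a b' s
  have st1: "(\<Sum>(c, d)\<leftarrow>\<Delta> (S a). F (c * b) d) = (\<Sum>(b', s)\<leftarrow>\<Delta> b. R a b' s)" for a b
  proof -
    have bb: "bil (\<lambda>x y. F (x * b) y)" by (intro bilI lrs F1' F2')
    have "(\<Sum>(c, d)\<leftarrow>\<Delta> (S a). F (c * b) d) = (\<Sum>(c, d)\<leftarrow>\<Delta> (S a * 1). F (c * b) d)" by simp
    also have "\<dots> = (\<Sum>(c, d)\<leftarrow>\<Delta> (S a). \<Sum>(p, q)\<leftarrow>\<Delta> 1. F (c * p * b) (d * q))"
      by (rule MU[OF bb])
    also have "\<dots> = (\<Sum>(p, q)\<leftarrow>\<Delta> 1. G a (p * b) q)"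
      unfolding G_def by (subst sum_swap) (simp add: mult.assoc)
    also have "\<dots> = (\<Sum>(x, y)\<leftarrow>\<Delta> b. \<Sum>(r, s)\<leftarrow>\<Delta> y. G a x (r * S s))"
      by (rule L1[symmetric]) (unfold G_def, intro bilI lrs F1' F2')
    also have "\<dots> = (\<Sum>(x, y)\<leftarrow>\<Delta> b. \<Sum>(r, s)\<leftarrow>\<Delta> y. Q a x r s)"
      unfolding G_def Q_def ..
    also have "\<dots> = (\<Sum>(b', s)\<leftarrow>\<Delta> b. \<Sum>(x, r)\<leftarrow>\<Delta> b'. Q a x r s)"
      by (rule CA[symmetric]) (unfold Q_def, intro trilI lrs F1' F2')
    also have "\<dots> = (\<Sum>(b', s)\<leftarrow>\<Delta> b. R a b' s)"
    proof (rule sum_cong2)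
      fix b' s
      have bb2: "bil (\<lambda>e f. F e (f * S s))" by (intro bilI lrs F1' F2')
      show "(\<Sum>(x, r)\<leftarrow>\<Delta> b'. Q a x r s) = R a b' s"
        unfolding Q_def R_def MU[OF bb2] by (subst sum_swap) (simp add: mult.assoc)
    qed
    finally show ?thesis .
  qed
  have tR: "tril R" unfolding R_def by (intro trilI lrs F1' F2')
  have st2: "(\<Sum>(a', b')\<leftarrow>\<Delta> a. R a' b' s) = (\<Sum>(u, v)\<leftarrow>\<Delta> 1. F u (v * (\<Sum>(a', b')\<leftarrow>\<Delta> a. S a' * b') * S s))" for a s
  proof -
    have bb2: "bil (\<lambda>e f. F e (f * S s))" by (intro bilI lrs F1' F2')
    have hD: "hl (\<lambda>g. \<Sum>(e, f)\<leftarrow>\<Delta> g. F e (f * S s))" by (rule hl_D0[OF bb2])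
    have "(\<Sum>(a', b')\<leftarrow>\<Delta> a. R a' b' s) = (\<Sum>(e, f)\<leftarrow>\<Delta> (\<Sum>(a', b')\<leftarrow>\<Delta> a. S a' * b'). F e (f * S s))"
      unfolding R_def by (rule lin_sum2[OF hD, symmetric])
    also have "\<dots> = (\<Sum>(e, f)\<leftarrow>\<Delta> (\<Sum>(u, v)\<leftarrow>\<Delta> 1. sc (\<epsilon> (a * v)) u). F e (f * S s))"
      by (simp add: anti2)
    also have "\<dots> = (\<Sum>(u, v)\<leftarrow>\<Delta> 1. \<Sum>(e, f)\<leftarrow>\<Delta> u. scA (\<epsilon> (a * v)) (F e (f * S s)))"
      by (simp add: lin_sum2[OF hD] D_sc'[OF bb2] lin_sum2[OF scA_lin])
    also have "\<dots> = (\<Sum>(u, v)\<leftarrow>\<Delta> 1. \<Sum>(e, f)\<leftarrow>\<Delta> 1. scA (\<epsilon> (a * f)) (F u ((v * e) * S s)))"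
      by (rule U2) (intro trilI lrs F1' F2')
    also have "\<dots> = (\<Sum>(u, v)\<leftarrow>\<Delta> 1. F u (v * (\<Sum>(e, f)\<leftarrow>\<Delta> 1. sc (\<epsilon> (a * f)) e) * S s))"
    proof (rule sum_cong2)
      fix u v
      have l: "hl (\<lambda>z. F u (v * z * S s))" by (intro lrs F2')
      show "(\<Sum>(e, f)\<leftarrow>\<Delta> 1. scA (\<epsilon> (a * f)) (F u ((v * e) * S s))) = F u (v * (\<Sum>(e, f)\<leftarrow>\<Delta> 1. sc (\<epsilon> (a * f)) e) * S s)"
        using l by (simp add: lin_sum2[OF l]) (simp add: lin_def)
    qed
    also have "\<dots> = (\<Sum>(u, v)\<leftarrow>\<Delta> 1. F u (v * (\<Sum>(a', b')\<leftarrow>\<Delta> a. S a' * b') * S s))"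
      by (simp add: anti2)
    finally show ?thesis .
  qed
  have "(\<Sum>(a, b)\<leftarrow>\<Delta> h. \<Sum>(c, d)\<leftarrow>\<Delta> (S a). F (c * b) d) = (\<Sum>(a, b)\<leftarrow>\<Delta> h. \<Sum>(b', s)\<leftarrow>\<Delta> b. R a b' s)"
    by (simp add: st1)
  also have "\<dots> = (\<Sum>(a, s)\<leftarrow>\<Delta> h. \<Sum>(a', b')\<leftarrow>\<Delta> a. R a' b' s)"
    by (rule CA[OF tR, symmetric])
  also have "\<dots> = (\<Sum>(a, s)\<leftarrow>\<Delta> h. \<Sum>(u, v)\<leftarrow>\<Delta> 1. F u (v * (\<Sum>(a', b')\<leftarrow>\<Delta> a. S a' * b') * S s))"
    by (simp add: st2)
  also have "\<dots> = (\<Sum>(u, v)\<leftarrow>\<Delta> 1. \<Sum>(a, s)\<leftarrow>\<Delta> h. F u (v * (\<Sum>(a', b')\<leftarrow>\<Delta> a. S a' * b') * S s))"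
    by (rule sum_swap)
  also have "\<dots> = (\<Sum>(u, v)\<leftarrow>\<Delta> 1. F u (v * S h))"
  proof (rule sum_cong2)
    fix u v
    have l: "hl (\<lambda>z. F u (v * z))" by (intro lrs F2')
    have "S h = (\<Sum>(a, s)\<leftarrow>\<Delta> h. \<Sum>(a', b')\<leftarrow>\<Delta> a. S a' * b' * S s)"
      by (subst anti3) (simp add: delta2_left_def sum_list_concat_map comp_def case_prod_beta')
    also have "\<dots> = (\<Sum>(a, s)\<leftarrow>\<Delta> h. (\<Sum>(a', b')\<leftarrow>\<Delta> a. S a' * b') * S s)"
      by (simp add: hhsum[OF hh_mR[OF hh_id]])
    finally have "F u (v * S h) = F u (v * (\<Sum>(a, s)\<leftarrow>\<Delta> h. (\<Sum>(a', b')\<leftarrow>\<Delta> a. S a' * b') * S s))" by simp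
    also have "\<dots> = (\<Sum>(a, s)\<leftarrow>\<Delta> h. F u (v * ((\<Sum>(a', b')\<leftarrow>\<Delta> a. S a' * b') * S s)))"
      by (rule lin_sum2[OF l])
    finally show "(\<Sum>(a, s)\<leftarrow>\<Delta> h. F u (v * (\<Sum>(a', b')\<leftarrow>\<Delta> a. S a' * b') * S s)) = F u (v * S h)"
      by (simp add: mult.assoc)
  qed
  finally show ?thesis .
qed

end



context wh begin

abbreviation "al \<equiv> lin scA scA"

lemma Sp:
  assumes G1: "\<And>v. al (\<lambda>z. G z v)" and G2: "\<And>z. hl (\<lambda>v. G z v)"
  shows "(\<Sum>(u, v)\<leftarrow>\<Delta> 1. G (act u (act h x)) v) = (\<Sum>(u, v)\<leftarrow>\<Delta> 1. G (act (u * h) x) v)"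
proof -
  have G1': "\<And>f v. hl f \<Longrightarrow> hl (\<lambda>h. G (f h) v)" by (rule lin_comp[OF G1])
  have G2': "\<And>m z. hh m \<Longrightarrow> hl (\<lambda>h. G z (m h))" by (rule lin_comp[OF G2])
  have "(\<Sum>(u, v)\<leftarrow>\<Delta> 1. G (act u (act h x)) v) = (\<Sum>(u, v)\<leftarrow>\<Delta> 1. \<Sum>(c, d)\<leftarrow>\<Delta> u. G (act c 1 * act (d * h) x) v)"
    by (simp add: M3 lin_sum2[OF G1])
  also have "\<dots> = (\<Sum>(u, v)\<leftarrow>\<Delta> 1. \<Sum>(c, d)\<leftarrow>\<Delta> 1. G (act u 1 * act (v * c * h) x) d)"
    by (rule U2) (intro trilI lrs G1' G2')
  also have "\<dots> = (\<Sum>(c, d)\<leftarrow>\<Delta> 1. \<Sum>(u, v)\<leftarrow>\<Delta> 1. G (act u 1 * act (v * (c * h)) x) d)"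
    by (subst sum_swap) (simp add: mult.assoc)
  also have "\<dots> = (\<Sum>(c, d)\<leftarrow>\<Delta> 1. G (act 1 (act (c * h) x)) d)"
    by (simp add: M3 lin_sum2[OF G1])
  also have "\<dots> = (\<Sum>(u, v)\<leftarrow>\<Delta> 1. G (act (u * h) x) v)" by (simp add: M2)
  finally show ?thesis .
qed

lemma Tp:
  assumes G1: "\<And>z. hl (\<lambda>u. G u z)" and G2: "\<And>u. al (G u)"
  shows "(\<Sum>(u, v)\<leftarrow>\<Delta> 1. G u (act v (act m y))) = (\<Sum>(u, v)\<leftarrow>\<Delta> 1. G u (act (v * m) y))"
proof -
  have G1': "\<And>m z. hh m \<Longrightarrow> hl (\<lambda>h. G (m h) z)" by (rule lin_comp[OF G1])
  have G2': "\<And>f u. hl f \<Longrightarrow> hl (\<lambda>h. G u (f h))" by (rule lin_comp[OF G2])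
  have "(\<Sum>(u, v)\<leftarrow>\<Delta> 1. G u (act v (act m y))) = (\<Sum>(u, v)\<leftarrow>\<Delta> 1. \<Sum>(c, d)\<leftarrow>\<Delta> v. G u (act (c * m) y * act d 1))"
    by (simp add: M4 lin_sum2[OF G2])
  also have "\<dots> = (\<Sum>(a, b)\<leftarrow>\<Delta> 1. \<Sum>(c, d)\<leftarrow>\<Delta> a. G c (act (d * m) y * act b 1))"
    by (rule CA[symmetric]) (intro trilI lrs G1' G2')
  also have "\<dots> = (\<Sum>(a, b)\<leftarrow>\<Delta> 1. \<Sum>(c, d)\<leftarrow>\<Delta> 1. G c (act (a * d * m) y * act b 1))"
    by (rule U1) (intro trilI lrs G1' G2')
  also have "\<dots> = (\<Sum>(c, d)\<leftarrow>\<Delta> 1. \<Sum>(a, b)\<leftarrow>\<Delta> 1. G c (act (a * (d * m)) y * act b 1))"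
    by (subst sum_swap) (simp add: mult.assoc)
  also have "\<dots> = (\<Sum>(c, d)\<leftarrow>\<Delta> 1. G c (act 1 (act (d * m) y)))"
    by (simp add: M4 lin_sum2[OF G2])
  also have "\<dots> = (\<Sum>(u, v)\<leftarrow>\<Delta> 1. G u (act (v * m) y))" by (simp add: M2)
  finally show ?thesis .
qed

lemma al_mR: "al (\<lambda>z. z * y)" unfolding lin_def by (simp add: distrib_right scA1)
lemma al_mL: "al (\<lambda>z. y * z)" unfolding lin_def by (simp add: distrib_left scA2)

lemma P: "act a 1 * y = (\<Sum>(u, v)\<leftarrow>\<Delta> 1. act (u * a) 1 * act v y)"
proof -
  have "act a 1 * y = act 1 (act a 1 * y)" by (simp add: M2)
  also have "\<dots> = (\<Sum>(u, v)\<leftarrow>\<Delta> 1. act u (act a 1) * act v y)" by (rule M1)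
  also have "\<dots> = (\<Sum>(u, v)\<leftarrow>\<Delta> 1. act (u * a) 1 * act v y)"
    by (rule Sp[where G = "\<lambda>z v. z * act v y"]) (intro al_mR, intro lrs)
  finally show ?thesis .
qed

lemma Q: "(\<Sum>(a, b)\<leftarrow>\<Delta> p. act a (act (S b) y)) = act p 1 * y"
proof -
  have "(\<Sum>(a, b)\<leftarrow>\<Delta> p. act a (act (S b) y)) = (\<Sum>(a, b)\<leftarrow>\<Delta> p. \<Sum>(c, d)\<leftarrow>\<Delta> a. act c 1 * act (d * S b) y)"
    by (simp add: M3)
  also have "\<dots> = (\<Sum>(a, b)\<leftarrow>\<Delta> p. \<Sum>(c, d)\<leftarrow>\<Delta> b. act a 1 * act (c * S d) y)"
    by (rule CA) (intro trilI lrs)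
  also have "\<dots> = (\<Sum>(u, v)\<leftarrow>\<Delta> 1. act (u * p) 1 * act v y)"
    by (rule L1) (intro bilI lrs)
  also have "\<dots> = act p 1 * y" by (rule P[symmetric])
  finally show ?thesis .
qed

lemma R: "(\<Sum>(a, b)\<leftarrow>\<Delta> k. act (S a) (act b y)) = (\<Sum>(u, v)\<leftarrow>\<Delta> 1. act u y * act (v * S k) 1)"
proof -
  have "(\<Sum>(a, b)\<leftarrow>\<Delta> k. act (S a) (act b y)) = (\<Sum>(a, b)\<leftarrow>\<Delta> k. \<Sum>(c, d)\<leftarrow>\<Delta> (S a). act (c * b) y * act d 1)"
    by (simp add: M4)
  also have "\<dots> = (\<Sum>(u, v)\<leftarrow>\<Delta> 1. act u y * act (v * S k) 1)"
    by (rule K) (intro bilI lrs)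
  finally show ?thesis .
qed

end



context wh begin

lemma PR2: "(\<Sum>(a, b)\<leftarrow>\<Delta> k. act h (act a (act (S b) x))) = (\<Sum>(a, b)\<leftarrow>\<Delta> k. act (h * a) (act (S b) x))"
proof -
  have "(\<Sum>(a, b)\<leftarrow>\<Delta> k. act h (act a (act (S b) x))) = act h (\<Sum>(a, b)\<leftarrow>\<Delta> k. act a (act (S b) x))"
    by (rule lin_sum2[OF act_lin, symmetric])
  also have "\<dots> = act h (act k 1 * x)" by (simp add: Q)
  also have "\<dots> = (\<Sum>(a, b)\<leftarrow>\<Delta> h. (\<Sum>(c, d)\<leftarrow>\<Delta> a. act (c * k) 1 * act d 1) * act b x)"
    by (simp add: M1 M4)
  also have "\<dots> = (\<Sum>(a, b)\<leftarrow>\<Delta> h. \<Sum>(c, d)\<leftarrow>\<Delta> a. act (c * k) 1 * act d 1 * act b x)"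
    by (simp add: lin_sum2[OF al_mR])
  also have "\<dots> = (\<Sum>(a, b)\<leftarrow>\<Delta> h. \<Sum>(c, d)\<leftarrow>\<Delta> b. act (a * k) 1 * act c 1 * act d x)"
    by (rule CA) (intro trilI lrs)
  also have "\<dots> = (\<Sum>(a, b)\<leftarrow>\<Delta> h. act (a * k) 1 * (\<Sum>(c, d)\<leftarrow>\<Delta> b. act c 1 * act d x))"
    by (simp add: lin_sum2[OF al_mL] mult.assoc)
  also have "\<dots> = (\<Sum>(a, b)\<leftarrow>\<Delta> h. act (a * k) 1 * act b x)" proof (rule sum_cong2)
    fix a b show "act (a * k) 1 * (\<Sum>(c, d)\<leftarrow>\<Delta> b. act c 1 * act d x) = act (a * k) 1 * act b x"
      using M1[of b 1 x] by simp
  qed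
  finally have L: "(\<Sum>(a, b)\<leftarrow>\<Delta> k. act h (act a (act (S b) x))) = (\<Sum>(a, b)\<leftarrow>\<Delta> h. act (a * k) 1 * act b x)" .
  have "(\<Sum>(a, b)\<leftarrow>\<Delta> k. act (h * a) (act (S b) x)) = (\<Sum>(a, b)\<leftarrow>\<Delta> k. \<Sum>(c, d)\<leftarrow>\<Delta> (h * a). act c 1 * act (d * S b) x)"
    by (simp add: M3)
  also have "\<dots> = (\<Sum>(a, b)\<leftarrow>\<Delta> k. \<Sum>(p, q)\<leftarrow>\<Delta> h. \<Sum>(c, d)\<leftarrow>\<Delta> a. act (p * c) 1 * act (q * d * S b) x)"
    by (rule sum_cong2) (rule MU, intro bilI lrs)
  also have "\<dots> = (\<Sum>(p, q)\<leftarrow>\<Delta> h. \<Sum>(a, b)\<leftarrow>\<Delta> k. \<Sum>(c, d)\<leftarrow>\<Delta> a. act (p * c) 1 * act (q * (d * S b)) x)"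
    by (subst sum_swap) (simp add: mult.assoc)
  also have "\<dots> = (\<Sum>(p, q)\<leftarrow>\<Delta> h. \<Sum>(a, b)\<leftarrow>\<Delta> k. \<Sum>(c, d)\<leftarrow>\<Delta> b. act (p * a) 1 * act (q * (c * S d)) x)"
    by (rule sum_cong2) (rule CA, intro trilI lrs)
  also have "\<dots> = (\<Sum>(p, q)\<leftarrow>\<Delta> h. \<Sum>(u, v)\<leftarrow>\<Delta> 1. act (p * (u * k)) 1 * act (q * v) x)"
    by (rule sum_cong2) (rule L1, intro bilI lrs)
  also have "\<dots> = (\<Sum>(a, b)\<leftarrow>\<Delta> (h * 1). act (a * k) 1 * act b x)"
    by (subst MU) (intro bilI lrs, simp add: mult.assoc)
  finally show ?thesis using L by simp
qed

lemma PR3: "(\<Sum>(a, b)\<leftarrow>\<Delta> k. act h (act (S a) (act b x))) = (\<Sum>(a, b)\<leftarrow>\<Delta> k. act (h * S a) (act b x))"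
proof -
  have i: "(\<Sum>(u, v)\<leftarrow>\<Delta> 1. act u x * act (v * S k) 1) = x * act (S k) 1"
  proof -
    have "(\<Sum>(u, v)\<leftarrow>\<Delta> 1. act u x * act (v * S k) 1) = (\<Sum>(u, v)\<leftarrow>\<Delta> 1. act u x * act v (act (S k) 1))"
      by (rule Tp[where G = "\<lambda>u z. act u x * z", symmetric]) (intro lrs, rule al_mL)
    also have "\<dots> = act 1 (x * act (S k) 1)" by (simp add: M1)
    finally show ?thesis by (simp add: M2)
  qed
  have "(\<Sum>(a, b)\<leftarrow>\<Delta> k. act h (act (S a) (act b x))) = act h (\<Sum>(a, b)\<leftarrow>\<Delta> k. act (S a) (act b x))"
    by (rule lin_sum2[OF act_lin, symmetric])
  also have "\<dots> = act h (x * act (S k) 1)" by (simp add: R i)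
  also have "\<dots> = (\<Sum>(a, b)\<leftarrow>\<Delta> h. \<Sum>(c, d)\<leftarrow>\<Delta> b. act a x * (act c 1 * act (d * S k) 1))"
    by (simp add: M1 M3 lin_sum2[OF al_mL])
  also have "\<dots> = (\<Sum>(a, b)\<leftarrow>\<Delta> h. \<Sum>(c, d)\<leftarrow>\<Delta> a. act c x * (act d 1 * act (b * S k) 1))"
    by (rule CA[symmetric]) (intro trilI lrs)
  also have "\<dots> = (\<Sum>(a, b)\<leftarrow>\<Delta> h. (\<Sum>(c, d)\<leftarrow>\<Delta> a. act c x * act d 1) * act (b * S k) 1)"
    by (simp add: lin_sum2[OF al_mR] mult.assoc)
  also have "\<dots> = (\<Sum>(a, b)\<leftarrow>\<Delta> h. act a x * act (b * S k) 1)"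
    by (simp add: M1[symmetric])
  finally have L: "(\<Sum>(a, b)\<leftarrow>\<Delta> k. act h (act (S a) (act b x))) = (\<Sum>(a, b)\<leftarrow>\<Delta> h. act a x * act (b * S k) 1)" .
  have "(\<Sum>(a, b)\<leftarrow>\<Delta> k. act (h * S a) (act b x)) = (\<Sum>(a, b)\<leftarrow>\<Delta> k. \<Sum>(c, d)\<leftarrow>\<Delta> (h * S a). act (c * b) x * act d 1)"
    by (simp add: M4)
  also have "\<dots> = (\<Sum>(a, b)\<leftarrow>\<Delta> k. \<Sum>(p, q)\<leftarrow>\<Delta> h. \<Sum>(c, d)\<leftarrow>\<Delta> (S a). act (p * c * b) x * act (q * d) 1)"
    by (rule sum_cong2) (rule MU, intro bilI lrs)
  also have "\<dots> = (\<Sum>(p, q)\<leftarrow>\<Delta> h. \<Sum>(a, b)\<leftarrow>\<Delta> k. \<Sum>(c, d)\<leftarrow>\<Delta> (S a). act (p * (c * b)) x * act (q * d) 1)"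
    by (subst sum_swap) (simp add: mult.assoc)
  also have "\<dots> = (\<Sum>(p, q)\<leftarrow>\<Delta> h. \<Sum>(u, v)\<leftarrow>\<Delta> 1. act (p * u) x * act (q * (v * S k)) 1)"
    by (rule sum_cong2) (rule K, intro bilI lrs)
  also have "\<dots> = (\<Sum>(a, b)\<leftarrow>\<Delta> (h * 1). act a x * act (b * S k) 1)"
    by (subst MU) (intro bilI lrs, simp add: mult.assoc)
  finally show ?thesis using L by simp
qed

lemma PR4: "(\<Sum>(a, b)\<leftarrow>\<Delta> h. act a (act (S b) (act k x))) = (\<Sum>(a, b)\<leftarrow>\<Delta> h. act a (act (S b * k) x))"
proof -
  have "(\<Sum>(a, b)\<leftarrow>\<Delta> h. act a (act (S b) (act k x))) = act h 1 * act k x" by (rule Q)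
  also have "\<dots> = (\<Sum>(u, v)\<leftarrow>\<Delta> 1. act (u * h) 1 * act v (act k x))" by (rule P)
  also have "\<dots> = (\<Sum>(u, v)\<leftarrow>\<Delta> 1. act (u * h) 1 * act (v * k) x)"
    by (rule Tp[where G = "\<lambda>u z. act (u * h) 1 * z"]) (intro lrs, rule al_mL)
  finally have L: "(\<Sum>(a, b)\<leftarrow>\<Delta> h. act a (act (S b) (act k x))) = (\<Sum>(u, v)\<leftarrow>\<Delta> 1. act (u * h) 1 * act (v * k) x)" .
  have "(\<Sum>(a, b)\<leftarrow>\<Delta> h. act a (act (S b * k) x)) = (\<Sum>(a, b)\<leftarrow>\<Delta> h. \<Sum>(c, d)\<leftarrow>\<Delta> a. act c 1 * act (d * (S b * k)) x)"
    by (simp add: M3)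
  also have "\<dots> = (\<Sum>(a, b)\<leftarrow>\<Delta> h. \<Sum>(c, d)\<leftarrow>\<Delta> b. act a 1 * act (c * (S d * k)) x)"
    by (rule CA) (intro trilI lrs)
  also have "\<dots> = (\<Sum>(a, b)\<leftarrow>\<Delta> h. \<Sum>(c, d)\<leftarrow>\<Delta> b. act a 1 * act ((c * S d) * k) x)"
    by (simp add: mult.assoc)
  also have "\<dots> = (\<Sum>(u, v)\<leftarrow>\<Delta> 1. act (u * h) 1 * act (v * k) x)"
    by (rule L1) (intro bilI lrs)
  finally show ?thesis using L by simp
qed

lemma PR5: "(\<Sum>(a, b)\<leftarrow>\<Delta> h. act (S a) (act b (act k x))) = (\<Sum>(a, b)\<leftarrow>\<Delta> h. act (S a) (act (b * k) x))"
proof -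
  have "(\<Sum>(a, b)\<leftarrow>\<Delta> h. act (S a) (act b (act k x))) = (\<Sum>(u, v)\<leftarrow>\<Delta> 1. act u (act k x) * act (v * S h) 1)"
    by (rule R)
  also have "\<dots> = (\<Sum>(u, v)\<leftarrow>\<Delta> 1. act (u * k) x * act (v * S h) 1)"
    by (rule Sp[where G = "\<lambda>z v. z * act (v * S h) 1"]) (rule al_mR, intro lrs)
  finally have L: "(\<Sum>(a, b)\<leftarrow>\<Delta> h. act (S a) (act b (act k x))) = (\<Sum>(u, v)\<leftarrow>\<Delta> 1. act (u * k) x * act (v * S h) 1)" .
  have "(\<Sum>(a, b)\<leftarrow>\<Delta> h. act (S a) (act (b * k) x)) = (\<Sum>(a, b)\<leftarrow>\<Delta> h. \<Sum>(c, d)\<leftarrow>\<Delta> (S a). act (c * b * k) x * act d 1)"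
    by (simp add: M4 mult.assoc)
  also have "\<dots> = (\<Sum>(u, v)\<leftarrow>\<Delta> 1. act (u * k) x * act (v * S h) 1)"
    by (rule K) (intro bilI lrs)
  finally show ?thesis using L by simp
qed

lemma PR6: "act h x = (\<Sum>(a, b, c)\<leftarrow>delta2_left \<Delta> h. act a (act (S b) (act c x)))"
proof -
  have "(\<Sum>(a, b, c)\<leftarrow>delta2_left \<Delta> h. act a (act (S b) (act c x))) = (\<Sum>(p, c)\<leftarrow>\<Delta> h. \<Sum>(a, b)\<leftarrow>\<Delta> p. act a (act (S b) (act c x)))"
    by (simp add: delta2_left_def sum_list_concat_map comp_def case_prod_beta')
  also have "\<dots> = (\<Sum>(p, c)\<leftarrow>\<Delta> h. act p 1 * act c x)" by (simp add: Q)
  also have "\<dots> = act h x" using M1[of h 1 x] by simp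
  finally show ?thesis by simp
qed

lemma main: "partial_representation_End sc \<Delta> S scA act"
  unfolding partial_representation_End_def
  using act_linA act_linH M2 PR2 PR3 PR4 PR5 PR6 by blast

end


theorem proposition3p5:
  fixes sc :: "'k::field \<Rightarrow> 'h::ring_1 \<Rightarrow> 'h"
    and \<Delta> :: "'h \<Rightarrow> ('h \<times> 'h) list"
    and \<epsilon> :: "'h \<Rightarrow> 'k"
    and S :: "'h \<Rightarrow> 'h"
    and scA :: "'k \<Rightarrow> 'a::ring_1 \<Rightarrow> 'a"
    and act :: "'h \<Rightarrow> 'a \<Rightarrow> 'a"
  assumes "weak_hopf_algebra sc \<Delta> \<epsilon> S"
    and "symmetric_partial_module_algebra sc \<Delta> scA act"
  shows "partial_representation_End sc \<Delta> S scA (\<lambda>h a. act h a)"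
proof -
  interpret wh sc \<Delta> \<epsilon> S scA act by (rule wh.intro) (rule assms)+
  show ?thesis using main by simp
qed

end
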